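(* Consider the discounted Markov decision process and its optimal policy $\pi^*$ described in the context. For every traffic type $s\in\mathcal{S}$ there exists an integer $K_{th}(s)$ such that for all $k\in\{0,1,\dots,K\}$, $$\pi^*(s,k)=\begin{cases}0,& k<K_{th}(s),\\ 1,& k\ge K_{th}(s).\end{cases}$$
   Context: Let $\mathcal{S}=\{s_0,s_1,\dots,s_N\}$ be a finite set of traffic types, $s_0$ denoting the idle state, with probabilities $p(s)\in(0,1)$, $\sum_{s}p(s)=1$ (types in successive slots i.i.d.). Non-idle types have benefits $0<b_{s_1}<\dots<b_{s_N}$. Fix an integer $K\ge1$, a cost $c>0$, $p,q\in(0,1)$ and $\beta\in(0,1)$. States are $(s,k)$, $s\in\mathcal{S}$, $k\in\{0,\dots,K\}$; actions $a\in\{0,1\}$ (for $s\ne s_0$: $0$ = cellular mode, $1$ = D2D mode; for $s=s_0$: $0$ = accept D2D requests, $1$ = refuse). Transition probabilities $P\{(s',k')\mid(s,k),a\}$: for $s\ne s_0,k>0$: $p(s')\{(1-a)+a(1-q)\}$ if $k'=k$, $p(s')qa$ if $k'=k-1$; for $s\ne s_0,k=0$: $p(s')$ if $k'=0$; for $s=s_0,k<K$: $p(s')\{a+(1-a)(1-p)\}$ if $k'=k$, $p(s')p(1-a)$ if $k'=k+1$; for $s=s_0,k=K$: $p(s')$ if $k'=K$; otherwise $0$. Expected rewards: $\mu(s_0,k,a)=-cp(1-a)$; for $s\ne s_0$, $\mu(s,k,a)=q\,a\,b_s\,I(k>0)$. $V^*$ is the optimal discounted value function, the unique solution of $V^*(s,k)=\max_{a\in\{0,1\}}\{\mu(s,k,a)+\beta\sum_{(s',k')}P\{(s',k')\mid(s,k),a\}V^*(s',k')\}$.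 The optimal policy $\pi^*$: $\pi^*(s,0)=0$ for $s\ne s_0$, $\pi^*(s_0,K)=1$, and in every other state $\pi^*(s,k)=0$ if action $0$ attains the maximum in this Bellman equation and $\pi^*(s,k)=1$ otherwise. *)

theory Defs
  imports Complex_Main
begin

(* Traffic types are 0..N, type 0 is the idle state s_0.
   ps s = probability of type s; b s = benefit of non-idle type s.
   Queue/level k ranges over 0..K.  Actions a are naturals in {0,1}. *)

definition trans_prob ::
  "nat \<Rightarrow> (nat \<Rightarrow> real) \<Rightarrow> real \<Rightarrow> real \<Rightarrow>
   nat \<Rightarrow> nat \<Rightarrow> nat \<Rightarrow> nat \<Rightarrow> nat \<Rightarrow> real" where
  "trans_prob K ps p q s k a s' k' =
     (let a' = real a in
      if s \<noteq> 0 \<and> k > 0 then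
        (if k' = k then ps s' * ((1 - a') + a' * (1 - q))
         else if k' = k - 1 then ps s' * q * a' else 0)
      else if s \<noteq> 0 \<and> k = 0 then
        (if k' = 0 then ps s' else 0)
      else if s = 0 \<and> k < K then
        (if k' = k then ps s' * (a' + (1 - a') * (1 - p))
         else if k' = k + 1 then ps s' * p * (1 - a') else 0)
      else if s = 0 \<and> k = K then
        (if k' = K then ps s' else 0)
      else 0)"

definition reward ::
  "(nat \<Rightarrow> real) \<Rightarrow> real \<Rightarrow> real \<Rightarrow> real \<Rightarrow> nat \<Rightarrow> nat \<Rightarrow> nat \<Rightarrow> real" where
  "reward b c p q s k a =
     (if s = 0 then - c * p * (1 - real a)
      else q * real a * b s * (if k > 0 then 1 else 0))"

definition Qval ::
  "nat \<Rightarrow> nat \<Rightarrow> (nat \<Rightarrow> real) \<Rightarrow> (nat \<Rightarrow> real) \<Rightarrow> real \<Rightarrow> real \<Rightarrow> real \<Rightarrow> real \<Rightarrow>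
   (nat \<Rightarrow> nat \<Rightarrow> real) \<Rightarrow> nat \<Rightarrow> nat \<Rightarrow> nat \<Rightarrow> real" where
  "Qval N K ps b c p q \<beta> V s k a =
     reward b c p q s k a +
     \<beta> * (\<Sum>s'\<in>{0..N}. \<Sum>k'\<in>{0..K}. trans_prob K ps p q s k a s' k' * V s' k')"

definition is_bellman_solution ::
  "nat \<Rightarrow> nat \<Rightarrow> (nat \<Rightarrow> real) \<Rightarrow> (nat \<Rightarrow> real) \<Rightarrow> real \<Rightarrow> real \<Rightarrow> real \<Rightarrow> real \<Rightarrow>
   (nat \<Rightarrow> nat \<Rightarrow> real) \<Rightarrow> bool" where
  "is_bellman_solution N K ps b c p q \<beta> V \<longleftrightarrow>
     (\<forall>s\<le>N. \<forall>k\<le>K. V s k = max (Qval N K ps b c p q \<beta> V s k 0) (Qval N K ps b c p q \<beta> V s k 1))"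

definition opt_policy ::
  "nat \<Rightarrow> nat \<Rightarrow> (nat \<Rightarrow> real) \<Rightarrow> (nat \<Rightarrow> real) \<Rightarrow> real \<Rightarrow> real \<Rightarrow> real \<Rightarrow> real \<Rightarrow>
   (nat \<Rightarrow> nat \<Rightarrow> real) \<Rightarrow> nat \<Rightarrow> nat \<Rightarrow> nat" where
  "opt_policy N K ps b c p q \<beta> V s k =
     (if s \<noteq> 0 \<and> k = 0 then 0
      else if s = 0 \<and> k = K then 1
      else if Qval N K ps b c p q \<beta> V s k 0 \<ge> Qval N K ps b c p q \<beta> V s k 1 then 0
      else 1)"

end

theory Submission
  imports Defs
begin

lemma sum2:
  fixes f :: "'a \<Rightarrow> real"
  assumes "finite A" "i \<in> A" "j \<in> A" "i \<noteq> j"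
  shows "(\<Sum>x\<in>A. (if x = i then X else if x = j then Y else 0) * f x) = X * f i + Y * f j"
proof -
  have "(\<Sum>x\<in>A. (if x = i then X else if x = j then Y else 0) * f x)
      = (\<Sum>x\<in>A. (if x = i then X * f i else 0) + (if x = j then Y * f j else 0))"
    by (rule sum.cong) (use assms in auto)
  also have "\<dots> = X * f i + Y * f j"
    using assms by (simp add: sum.distrib)
  finally show ?thesis .
qed

lemma sum1:
  fixes f :: "'a \<Rightarrow> real"
  assumes "finite A" "i \<in> A"
  shows "(\<Sum>x\<in>A. (if x = i then X else 0) * f x) = X * f i"
proof -
  have "(\<Sum>x\<in>A. (if x = i then X else 0) * f x) = (\<Sum>x\<in>A. (if x = i then X * f i else 0))"
    by (rule sum.cong) auto
  also have "\<dots> = X * f i" using assms by simp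
  finally show ?thesis .
qed

definition Wf :: "nat \<Rightarrow> (nat \<Rightarrow> real) \<Rightarrow> (nat \<Rightarrow> nat \<Rightarrow> real) \<Rightarrow> nat \<Rightarrow> real" where
  "Wf N ps U k = (\<Sum>s\<in>{0..N}. ps s * U s k)"

lemma Q_pos:
  assumes "s \<noteq> 0" "0 < k" "k \<le> K"
  shows "Qval N K ps b c p q \<beta> U s k a = q * real a * b s +
     \<beta> * ((1 - real a + real a * (1 - q)) * Wf N ps U k + q * real a * Wf N ps U (k - 1))"
proof -
  have t: "trans_prob K ps p q s k a s' k' = (if k' = k then ps s' * (1 - real a + real a * (1 - q))
      else if k' = k - 1 then ps s' * q * real a else 0)" for s' k'
    using assms by (simp add: trans_prob_def Let_def)
  have i: "(\<Sum>k'\<in>{0..K}. trans_prob K ps p q s k a s' k' * U s' k') =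
     ps s' * (1 - real a + real a * (1 - q)) * U s' k + ps s' * q * real a * U s' (k - 1)" for s'
    unfolding t using assms by (intro sum2) auto
  show ?thesis
    unfolding Qval_def i Wf_def using assms
    by (simp add: reward_def sum.distrib sum_subtractf sum_distrib_left algebra_simps)
qed

lemma Q_k0:
  assumes "s \<noteq> 0" "k = 0"
  shows "Qval N K ps b c p q \<beta> U s k a = \<beta> * Wf N ps U 0"
proof -
  have t: "trans_prob K ps p q s k a s' k' = (if k' = 0 then ps s' else 0)" for s' k'
    using assms by (simp add: trans_prob_def Let_def)
  have i: "(\<Sum>k'\<in>{0..K}. trans_prob K ps p q s k a s' k' * U s' k') = ps s' * U s' 0" for s'
    unfolding t by (intro sum1) auto
  show ?thesis
    unfolding Qval_def i Wf_def using assms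
    by (simp add: reward_def sum.distrib sum_subtractf sum_distrib_left algebra_simps)
qed

lemma Q_0lt:
  assumes "s = 0" "k < K"
  shows "Qval N K ps b c p q \<beta> U s k a = - c * p * (1 - real a) +
     \<beta> * ((real a + (1 - real a) * (1 - p)) * Wf N ps U k + p * (1 - real a) * Wf N ps U (Suc k))"
proof -
  have t: "trans_prob K ps p q s k a s' k' = (if k' = k then ps s' * (real a + (1 - real a) * (1 - p))
      else if k' = Suc k then ps s' * p * (1 - real a) else 0)" for s' k'
    using assms by (simp add: trans_prob_def Let_def)
  have i: "(\<Sum>k'\<in>{0..K}. trans_prob K ps p q s k a s' k' * U s' k') =
     ps s' * (real a + (1 - real a) * (1 - p)) * U s' k + ps s' * p * (1 - real a) * U s' (Suc k)" for s'
    unfolding t using assms by (intro sum2) auto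
  show ?thesis
    unfolding Qval_def i Wf_def using assms
    by (simp add: reward_def sum.distrib sum_subtractf sum_distrib_left algebra_simps)
qed

lemma Q_0K:
  assumes "s = 0" "k = K"
  shows "Qval N K ps b c p q \<beta> U s k a = - c * p * (1 - real a) + \<beta> * Wf N ps U K"
proof -
  have t: "trans_prob K ps p q s k a s' k' = (if k' = K then ps s' else 0)" for s' k'
    using assms by (simp add: trans_prob_def Let_def)
  have i: "(\<Sum>k'\<in>{0..K}. trans_prob K ps p q s k a s' k' * U s' k') = ps s' * U s' K" for s'
    unfolding t by (intro sum1) auto
  show ?thesis
    unfolding Qval_def i Wf_def using assms
    by (simp add: reward_def sum.distrib sum_subtractf sum_distrib_left algebra_simps)
qed


lemma thr:
  fixes P :: "nat \<Rightarrow> bool"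
  assumes up: "\<forall>i j. i \<le> j \<longrightarrow> j \<le> K \<longrightarrow> P i \<longrightarrow> P j"
  shows "\<exists>Kth::int. \<forall>k\<le>K. (if P k then 1 else (0::nat)) = (if int k < Kth then 0 else 1)"
proof (cases "\<exists>k\<le>K. P k")
  case True
  define m where "m = (LEAST k. k \<le> K \<and> P k)"
  have m: "m \<le> K \<and> P m" unfolding m_def using True by (metis (mono_tags, lifting) LeastI)
  have "\<forall>k\<le>K. (if P k then 1 else (0::nat)) = (if int k < int m then 0 else 1)"
  proof (intro allI impI)
    fix k assume k: "k \<le> K"
    show "(if P k then 1 else (0::nat)) = (if int k < int m then 0 else 1)"
    proof (cases "P k")
      case True
      then have "m \<le> k" unfolding m_def using k by (simp add: Least_le)
      then show ?thesis using True by simp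
    next
      case False
      have "\<not> m \<le> k" using up m k False by blast
      then show ?thesis using False by simp
    qed
  qed
  then show ?thesis by blast
next
  case False
  then have "\<forall>k\<le>K. (if P k then 1 else (0::nat)) = (if int k < int K + 1 then 0 else 1)" by auto
  then show ?thesis by blast
qed

lemma cvx:
  fixes \<alpha> \<gamma> x y M :: real
  assumes "0 \<le> \<alpha>" "0 \<le> \<gamma>" "\<alpha> + \<gamma> = 1" "\<bar>x\<bar> \<le> M" "\<bar>y\<bar> \<le> M"
  shows "\<bar>\<alpha> * x + \<gamma> * y\<bar> \<le> M"
proof -
  have "\<bar>\<alpha> * x + \<gamma> * y\<bar> \<le> \<alpha> * \<bar>x\<bar> + \<gamma> * \<bar>y\<bar>"
    using assms by (metis abs_mult abs_of_nonneg abs_triangle_ineq)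
  also have "\<dots> \<le> \<alpha> * M + \<gamma> * M"
    using assms by (intro add_mono mult_left_mono) auto
  also have "\<dots> = (\<alpha> + \<gamma>) * M" by (simp add: distrib_right)
  also have "\<dots> = M" using assms by simp
  finally show ?thesis .
qed

lemma maxd:
  fixes A d :: real
  assumes "0 \<le> d"
  shows "max 0 (A + d) - max 0 A \<le> d"
  using assms by (simp add: max_def)

lemma maxlip:
  fixes a b c d e :: real
  assumes "\<bar>a - c\<bar> \<le> e" "\<bar>b - d\<bar> \<le> e"
  shows "\<bar>max a b - max c d\<bar> \<le> e"
  using assms by (simp add: max_def abs_le_iff)

definition conc :: "nat \<Rightarrow> (nat \<Rightarrow> real) \<Rightarrow> bool" where
  "conc K w \<longleftrightarrow> (\<forall>j. 1 \<le> j \<longrightarrow> Suc j \<le> K \<longrightarrow> w (Suc j) - w j \<le> w j - w (j - 1))"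

lemma Dmono:
  assumes "conc K w" "1 \<le> i" "i \<le> j" "j \<le> K"
  shows "w j - w (j - 1) \<le> w i - w (i - 1)"
  using assms(3,4)
proof (induction j rule: dec_induct)
  case base
  then show ?case by simp
next
  case (step n)
  have "w (Suc n) - w n \<le> w n - w (n - 1)"
    using assms(1,2) step unfolding conc_def by auto
  then show ?case using step by simp
qed

context
  fixes N K :: nat and ps b :: "nat \<Rightarrow> real" and c p q \<beta> :: real
  assumes ps_nn: "\<forall>s\<le>N. 0 \<le> ps s"
    and ps_sum: "(\<Sum>s\<in>{0..N}. ps s) = 1"
    and c_pos: "c > 0"
    and p_range: "0 < p" "p < 1"
    and q_range: "0 < q" "q < 1"
    and beta_range: "0 < \<beta>" "\<beta> < 1"
begin

definition ext :: "(nat \<Rightarrow> nat \<Rightarrow> real) \<Rightarrow> nat \<Rightarrow> nat \<Rightarrow> real" where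
  "ext U s k = (let w = Wf N ps U in
     (if s = 0 then (if k < K then max 0 (p * (\<beta> * (w (Suc k) - w k) - c)) else 0)
      else (if 0 < k then q * max 0 (b s - \<beta> * (w k - w (k - 1))) else 0)))"

definition Bop :: "(nat \<Rightarrow> nat \<Rightarrow> real) \<Rightarrow> nat \<Rightarrow> nat \<Rightarrow> real" where
  "Bop U s k = max (Qval N K ps b c p q \<beta> U s k 0) (Qval N K ps b c p q \<beta> U s k 1)"

lemma maxQ:
  assumes "k \<le> K"
  shows "Bop U s k = \<beta> * Wf N ps U k + ext U s k"
proof -
  consider "s \<noteq> 0" "0 < k" | "s \<noteq> 0" "k = 0" | "s = 0" "k < K" | "s = 0" "k = K"
    using assms by linarith
  then show ?thesis
  proof cases
    case 1
    define w where "w = Wf N ps U"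
    define Y where "Y = b s - \<beta> * (w k - w (k - 1))"
    have e: "Qval N K ps b c p q \<beta> U s k 1 = \<beta> * w k + q * Y"
      using 1 assms by (simp add: Q_pos w_def Y_def algebra_simps)
    have e0: "Qval N K ps b c p q \<beta> U s k 0 = \<beta> * w k"
      using 1 assms by (simp add: Q_pos w_def)
    have "max (\<beta> * w k) (\<beta> * w k + q * Y) = \<beta> * w k + q * max 0 Y"
    proof (cases "Y \<le> 0")
      case True
      then have "q * Y \<le> 0" using q_range by (simp add: mult_nonneg_nonpos)
      then show ?thesis using True by simp
    next
      case False
      then have "q * Y > 0" using q_range by simp
      then show ?thesis using False by simp
    qed
    then show ?thesis using 1 unfolding Bop_def e e0 ext_def Let_def Y_def w_def by simp
  next
    case 2
    then show ?thesis using assms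
      by (simp add: Bop_def ext_def Q_k0)
  next
    case 3
    then show ?thesis using assms
      by (simp add: Bop_def ext_def Q_0lt max_def algebra_simps Let_def)
  next
    case 4
    then show ?thesis using assms c_pos p_range
      by (simp add: Bop_def ext_def Q_0K max_def algebra_simps)
  qed
qed


lemma ext_conc:
  assumes cw: "conc K (Wf N ps U)" and j: "1 \<le> j" "Suc j \<le> K"
  shows "\<beta> * (Wf N ps U (Suc j) - 2 * Wf N ps U j + Wf N ps U (j - 1))
     + (ext U s (Suc j) - 2 * ext U s j + ext U s (j - 1)) \<le> 0"
proof -
  define w where "w = Wf N ps U"
  have cw': "\<And>i. 1 \<le> i \<Longrightarrow> Suc i \<le> K \<Longrightarrow> w (Suc i) - w i \<le> w i - w (i - 1)"
    using cw unfolding conc_def w_def by auto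
  define F where "F = \<beta> * (w (Suc j) - 2 * w j + w (j - 1))"
  define x where "x = \<beta> * (w j - w (j - 1))"
  define y where "y = \<beta> * (w (Suc j) - w j)"
  have E: "w (Suc j) - 2 * w j + w (j - 1) \<le> 0" using cw'[OF j] by simp
  have F: "F \<le> 0" unfolding F_def using E beta_range by (simp add: mult_nonneg_nonpos)
  have xy: "x - y = - F" unfolding x_def y_def F_def by (simp add: algebra_simps)
  show ?thesis
  proof (cases "s = 0")
    case True
    have e1: "ext U s (Suc j) \<le> ext U s j"
    proof (cases "Suc j < K")
      case True
      have "w (Suc (Suc j)) - w (Suc j) \<le> w (Suc j) - w j" using cw'[of "Suc j"] True j by simp
      then have "\<beta> * (w (Suc (Suc j)) - w (Suc j)) \<le> \<beta> * (w (Suc j) - w j)"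
        using beta_range by (simp add: mult_left_mono)
      then have "p * (\<beta> * (w (Suc (Suc j)) - w (Suc j)) - c) \<le> p * (\<beta> * (w (Suc j) - w j) - c)"
        using p_range by (simp add: mult_left_mono)
      then show ?thesis using True \<open>s = 0\<close> j unfolding ext_def Let_def w_def by simp
    next
      case False
      then show ?thesis using \<open>s = 0\<close> j unfolding ext_def Let_def by simp
    qed
    have sj: "Suc (j - 1) = j" using j by simp
    have e2: "ext U s (j - 1) - ext U s j \<le> p * (x - y)"
    proof -
      have "ext U s (j - 1) - ext U s j = max 0 (p * (y - c) + p * (x - y)) - max 0 (p * (y - c))"
        using \<open>s = 0\<close> j unfolding ext_def Let_def x_def y_def w_def sj
        by (simp add: algebra_simps)
      also have "\<dots> \<le> p * (x - y)"
        by (rule maxd) (use p_range xy F in \<open>simp add: mult_nonneg_nonpos\<close>)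
      finally show ?thesis .
    qed
    have "F + p * (- F) = (1 - p) * F" by (simp add: algebra_simps)
    moreover have "(1 - p) * F \<le> 0" using p_range F by (simp add: mult_nonneg_nonpos)
    moreover have "p * (x - y) = p * (- F)" using xy by simp
    ultimately show ?thesis using e1 e2 unfolding F_def w_def by linarith
  next
    case False
    have e1: "ext U s (j - 1) \<le> ext U s j"
    proof (cases "j - 1 = 0")
      case True
      then show ?thesis using False j q_range unfolding ext_def Let_def by simp
    next
      case jj: False
      have "w j - w (j - 1) \<le> w (j - 1) - w (j - 1 - 1)" using cw'[of "j - 1"] jj j by simp
      then have "\<beta> * (w j - w (j - 1)) \<le> \<beta> * (w (j - 1) - w (j - 1 - 1))"
        using beta_range by (simp add: mult_left_mono)
      then have "max 0 (b s - \<beta> * (w (j - 1) - w (j - 1 - 1))) \<le> max 0 (b s - \<beta> * (w j - w (j - 1)))"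
        by simp
      then show ?thesis using jj j False q_range unfolding ext_def Let_def w_def
        by (simp add: mult_left_mono)
    qed
    have e2: "ext U s (Suc j) - ext U s j \<le> q * (x - y)"
    proof -
      have "ext U s (Suc j) - ext U s j = q * (max 0 ((b s - x) + (x - y)) - max 0 (b s - x))"
        using False j unfolding ext_def Let_def x_def y_def w_def
        by (simp add: algebra_simps)
      also have "\<dots> \<le> q * (x - y)"
        using mult_left_mono[OF maxd[of "x - y" "b s - x"], of q] xy F q_range by simp
      finally show ?thesis .
    qed
    have "F + q * (- F) = (1 - q) * F" by (simp add: algebra_simps)
    moreover have "(1 - q) * F \<le> 0" using q_range F by (simp add: mult_nonneg_nonpos)
    moreover have "q * (x - y) = q * (- F)" using xy by simp
    ultimately show ?thesis using e1 e2 unfolding F_def w_def by linarith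
  qed
qed

lemma conc_step:
  assumes "conc K (Wf N ps U)"
  shows "conc K (Wf N ps (Bop U))"
  unfolding conc_def
proof (intro allI impI)
  fix j assume j: "1 \<le> j" "Suc j \<le> K"
  define G where "G s = ps s * (Bop U s (Suc j) - 2 * Bop U s j + Bop U s (j - 1))" for s
  have "(\<Sum>s\<in>{0..N}. G s) = Wf N ps (Bop U) (Suc j) - 2 * Wf N ps (Bop U) j + Wf N ps (Bop U) (j - 1)"
    unfolding G_def Wf_def by (simp add: sum.distrib sum_subtractf sum_distrib_left algebra_simps)
  moreover have "(\<Sum>s\<in>{0..N}. G s) \<le> 0"
  proof (rule sum_nonpos)
    fix s assume s: "s \<in> {0..N}"
    have "Bop U s (Suc j) - 2 * Bop U s j + Bop U s (j - 1) =
       \<beta> * (Wf N ps U (Suc j) - 2 * Wf N ps U j + Wf N ps U (j - 1))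
     + (ext U s (Suc j) - 2 * ext U s j + ext U s (j - 1))"
      using j by (simp add: maxQ algebra_simps)
    also have "\<dots> \<le> 0" by (rule ext_conc[OF assms j])
    finally show "G s \<le> 0" unfolding G_def using ps_nn s by (simp add: mult_nonneg_nonpos)
  qed
  ultimately show "Wf N ps (Bop U) (Suc j) - Wf N ps (Bop U) j \<le> Wf N ps (Bop U) j - Wf N ps (Bop U) (j - 1)"
    by linarith
qed

lemma Qdiff:
  assumes k: "k \<le> K" and a: "a = 0 \<or> a = 1" and M: "\<forall>k\<le>K. \<bar>Wf N ps U k - Wf N ps V k\<bar> \<le> M"
  shows "\<bar>Qval N K ps b c p q \<beta> U s k a - Qval N K ps b c p q \<beta> V s k a\<bar> \<le> \<beta> * M"
proof -
  define d where "d k = Wf N ps U k - Wf N ps V k" for k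
  have "\<exists>\<alpha> \<gamma> k'. 0 \<le> \<alpha> \<and> 0 \<le> \<gamma> \<and> \<alpha> + \<gamma> = 1 \<and> k' \<le> K \<and>
     Qval N K ps b c p q \<beta> U s k a - Qval N K ps b c p q \<beta> V s k a = \<beta> * (\<alpha> * d k + \<gamma> * d k')"
  proof -
    consider "s \<noteq> 0" "0 < k" | "s \<noteq> 0" "k = 0" | "s = 0" "k < K" | "s = 0" "k = K"
      using k by linarith
    then show ?thesis
    proof cases
      case 1
      show ?thesis
        using a
      proof
        assume "a = 0"
        then show ?thesis using 1 k
          by (intro exI[of _ 1] exI[of _ 0] exI[of _ k]) (simp add: Q_pos d_def algebra_simps)
      next
        assume "a = 1"
        then show ?thesis using 1 k q_range
          by (intro exI[of _ "1 - q"] exI[of _ q] exI[of _ "k - 1"]) (simp add: Q_pos d_def algebra_simps)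
      qed
    next
      case 2
      then show ?thesis
        by (intro exI[of _ 1] exI[of _ 0] exI[of _ 0]) (simp add: Q_k0 d_def algebra_simps)
    next
      case 3
      show ?thesis
        using a
      proof
        assume "a = 0"
        then show ?thesis using 3 k p_range
          by (intro exI[of _ "1 - p"] exI[of _ p] exI[of _ "Suc k"]) (simp add: Q_0lt d_def algebra_simps)
      next
        assume "a = 1"
        then show ?thesis using 3 k
          by (intro exI[of _ 1] exI[of _ 0] exI[of _ k]) (simp add: Q_0lt d_def algebra_simps)
      qed
    next
      case 4
      then show ?thesis
        by (intro exI[of _ 1] exI[of _ 0] exI[of _ K]) (simp add: Q_0K d_def algebra_simps)
    qed
  qed
  then obtain \<alpha> \<gamma> k' where h: "0 \<le> \<alpha>" "0 \<le> \<gamma>" "\<alpha> + \<gamma> = 1" "k' \<le> K"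
    "Qval N K ps b c p q \<beta> U s k a - Qval N K ps b c p q \<beta> V s k a = \<beta> * (\<alpha> * d k + \<gamma> * d k')"
    by blast
  have "\<bar>\<alpha> * d k + \<gamma> * d k'\<bar> \<le> M"
    by (rule cvx) (use h M k in \<open>auto simp: d_def\<close>)
  then have "\<bar>\<beta> * (\<alpha> * d k + \<gamma> * d k')\<bar> \<le> \<beta> * M"
    using beta_range by (simp add: abs_mult mult_left_mono)
  then show ?thesis using h(5) by simp
qed


lemma Bdiff:
  assumes V: "is_bellman_solution N K ps b c p q \<beta> V"
    and M: "\<forall>k\<le>K. \<bar>Wf N ps U k - Wf N ps V k\<bar> \<le> M"
    and k: "k \<le> K"
  shows "\<bar>Wf N ps (Bop U) k - Wf N ps V k\<bar> \<le> \<beta> * M"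
proof -
  have Vf: "V s k = Bop V s k" if "s \<in> {0..N}" for s
    using V that k unfolding is_bellman_solution_def Bop_def by auto
  have "Wf N ps V k = (\<Sum>s\<in>{0..N}. ps s * Bop V s k)"
    unfolding Wf_def
  proof (rule sum.cong[OF refl])
    fix s assume s: "s \<in> {0..N}"
    show "ps s * V s k = ps s * Bop V s k" using Vf[OF s] by (rule arg_cong)
  qed
  then have eq: "Wf N ps (Bop U) k - Wf N ps V k = (\<Sum>s\<in>{0..N}. ps s * (Bop U s k - Bop V s k))"
    unfolding Wf_def by (simp add: sum_subtractf right_diff_distrib)
  have "\<bar>Wf N ps (Bop U) k - Wf N ps V k\<bar> \<le> (\<Sum>s\<in>{0..N}. \<bar>ps s * (Bop U s k - Bop V s k)\<bar>)"
    unfolding eq by (rule sum_abs)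
  also have "\<dots> \<le> (\<Sum>s\<in>{0..N}. ps s * (\<beta> * M))"
  proof (rule sum_mono)
    fix s assume s: "s \<in> {0..N}"
    have "\<bar>Bop U s k - Bop V s k\<bar> \<le> \<beta> * M"
      unfolding Bop_def by (rule maxlip; rule Qdiff[OF k _ M]) auto
    then show "\<bar>ps s * (Bop U s k - Bop V s k)\<bar> \<le> ps s * (\<beta> * M)"
    proof -
      have "ps s * \<bar>Bop U s k - Bop V s k\<bar> \<le> ps s * (\<beta> * M)"
        by (rule mult_left_mono) (use ps_nn s \<open>\<bar>Bop U s k - Bop V s k\<bar> \<le> \<beta> * M\<close> in auto)
      moreover have "\<bar>ps s * (Bop U s k - Bop V s k)\<bar> = ps s * \<bar>Bop U s k - Bop V s k\<bar>"
        using ps_nn s by (simp add: abs_mult)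
      ultimately show ?thesis by simp
    qed
  qed
  also have "\<dots> = (\<Sum>s\<in>{0..N}. ps s) * (\<beta> * M)" by (rule sum_distrib_right[symmetric])
  also have "\<dots> = \<beta> * M" using ps_sum by simp
  finally show ?thesis .
qed

lemma V_conc:
  assumes V: "is_bellman_solution N K ps b c p q \<beta> V"
  shows "conc K (Wf N ps V)"
proof -
  define Vn where "Vn n = (Bop ^^ n) (\<lambda>s k. 0)" for n
  have Vs: "Vn (Suc n) = Bop (Vn n)" for n unfolding Vn_def by simp
  have cn: "conc K (Wf N ps (Vn n))" for n
  proof (induction n)
    case 0
    then show ?case unfolding Vn_def conc_def Wf_def by simp
  next
    case (Suc n)
    then show ?case unfolding Vs by (rule conc_step)
  qed
  define C where "C = (\<Sum>k\<in>{0..K}. \<bar>Wf N ps V k\<bar>)"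
  have C0: "0 \<le> C" unfolding C_def by (simp add: sum_nonneg)
  have bd: "\<forall>k\<le>K. \<bar>Wf N ps (Vn n) k - Wf N ps V k\<bar> \<le> \<beta> ^ n * C" for n
  proof (induction n)
    case 0
    show ?case
    proof (intro allI impI)
      fix k assume k: "k \<le> K"
      have "\<bar>Wf N ps V k\<bar> \<le> C" unfolding C_def
        by (rule member_le_sum[of k "{0..K}" "\<lambda>k. \<bar>Wf N ps V k\<bar>"]) (use k in auto)
      then show "\<bar>Wf N ps (Vn 0) k - Wf N ps V k\<bar> \<le> \<beta> ^ 0 * C"
        unfolding Vn_def Wf_def by simp
    qed
  next
    case (Suc n)
    show ?case
      unfolding Vs using Bdiff[OF V Suc] by (simp add: mult.assoc)
  qed
  show ?thesis
    unfolding conc_def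
  proof (intro allI impI)
    fix j assume j: "1 \<le> j" "Suc j \<le> K"
    define x where "x = Wf N ps V (Suc j) - 2 * Wf N ps V j + Wf N ps V (j - 1)"
    have xb: "x \<le> 4 * C * \<beta> ^ n" for n
    proof -
      have c: "Wf N ps (Vn n) (Suc j) - Wf N ps (Vn n) j \<le> Wf N ps (Vn n) j - Wf N ps (Vn n) (j - 1)"
        using cn[of n] j unfolding conc_def by blast
      have b1: "\<bar>Wf N ps (Vn n) (Suc j) - Wf N ps V (Suc j)\<bar> \<le> \<beta> ^ n * C"
        using bd[of n] j by blast
      have b2: "\<bar>Wf N ps (Vn n) j - Wf N ps V j\<bar> \<le> \<beta> ^ n * C"
        using bd[of n] j by simp
      have b3: "\<bar>Wf N ps (Vn n) (j - 1) - Wf N ps V (j - 1)\<bar> \<le> \<beta> ^ n * C"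
        using bd[of n] j by simp
      have "4 * C * \<beta> ^ n = 4 * (\<beta> ^ n * C)" by simp
      then show ?thesis using c b1 b2 b3 unfolding x_def abs_le_iff by linarith
    qed
    have "x \<le> 0"
    proof (rule ccontr)
      assume "\<not> x \<le> 0"
      then have xp: "x > 0" by simp
      have pos: "0 < x / (4 * C + 1)" using xp C0 by simp
      obtain n where n: "\<beta> ^ n < x / (4 * C + 1)"
        using real_arch_pow_inv[OF pos beta_range(2)] by blast
      have bn: "0 \<le> \<beta> ^ n" using beta_range by simp
      have "4 * C * \<beta> ^ n \<le> (4 * C + 1) * \<beta> ^ n"
        using bn by (simp add: distrib_right)
      also have "\<dots> < (4 * C + 1) * (x / (4 * C + 1))"
        by (rule mult_strict_left_mono[OF n]) (use C0 in linarith)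
      also have "\<dots> = x" using C0 by simp
      finally have "4 * C * \<beta> ^ n < x" .
      then show False using xb[of n] by linarith
    qed
    then show "Wf N ps V (Suc j) - Wf N ps V j \<le> Wf N ps V j - Wf N ps V (j - 1)"
      unfolding x_def by simp
  qed
qed

lemma main:
  assumes V: "is_bellman_solution N K ps b c p q \<beta> V"
  shows "\<forall>s\<le>N. \<exists>Kth :: int. \<forall>k\<le>K.
           opt_policy N K ps b c p q \<beta> V s k = (if int k < Kth then 0 else 1)"
proof (intro allI impI)
  fix s assume sN: "s \<le> N"
  define w where "w = Wf N ps V"
  have cw: "conc K w" unfolding w_def by (rule V_conc[OF V])
  have Dm: "w j - w (j - 1) \<le> w i - w (i - 1)" if "1 \<le> i" "i \<le> j" "j \<le> K" for i j
    using Dmono[OF cw that] .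
  show "\<exists>Kth :: int. \<forall>k\<le>K. opt_policy N K ps b c p q \<beta> V s k = (if int k < Kth then 0 else 1)"
  proof (cases "s = 0")
    case False
    define P where "P k = (0 < k \<and> \<beta> * (w k - w (k - 1)) < b s)" for k
    have pol: "opt_policy N K ps b c p q \<beta> V s k = (if P k then 1 else 0)" if k: "k \<le> K" for k
    proof (cases "k = 0")
      case True
      then show ?thesis using False unfolding opt_policy_def P_def by simp
    next
      case k0: False
      have q1: "Qval N K ps b c p q \<beta> V s k 1 - Qval N K ps b c p q \<beta> V s k 0
          = q * (b s - \<beta> * (w k - w (k - 1)))"
        using False k0 k by (simp add: Q_pos w_def algebra_simps)
      have "(Qval N K ps b c p q \<beta> V s k 0 \<ge> Qval N K ps b c p q \<beta> V s k 1) \<longleftrightarrow>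
            q * (b s - \<beta> * (w k - w (k - 1))) \<le> 0" using q1 by linarith
      also have "\<dots> \<longleftrightarrow> \<not> P k" using q_range k0 unfolding P_def
        by (auto simp add: mult_le_0_iff)
      finally have ee: "(Qval N K ps b c p q \<beta> V s k 0 \<ge> Qval N K ps b c p q \<beta> V s k 1) \<longleftrightarrow> \<not> P k" .
      have "opt_policy N K ps b c p q \<beta> V s k = (if Qval N K ps b c p q \<beta> V s k 0 \<ge> Qval N K ps b c p q \<beta> V s k 1 then 0 else 1)"
        unfolding opt_policy_def using False k0 by simp
      then show ?thesis using ee by simp
    qed
    have up: "\<forall>i j. i \<le> j \<longrightarrow> j \<le> K \<longrightarrow> P i \<longrightarrow> P j"
    proof (intro allI impI)
      fix i j assume ij: "i \<le> j" "j \<le> K" "P i"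
      then have "w j - w (j - 1) \<le> w i - w (i - 1)" using Dm[of i j] unfolding P_def by auto
      then have "\<beta> * (w j - w (j - 1)) \<le> \<beta> * (w i - w (i - 1))"
        using beta_range by (simp add: mult_left_mono)
      then show "P j" using ij unfolding P_def by auto
    qed
    obtain Kth :: int where Kth: "\<forall>k\<le>K. (if P k then 1 else (0::nat)) = (if int k < Kth then 0 else 1)"
      using thr[OF up] by blast
    show ?thesis using pol Kth by (intro exI[of _ Kth]) auto
  next
    case True
    define P where "P k = (k = K \<or> \<beta> * (w (Suc k) - w k) < c)" for k
    have pol: "opt_policy N K ps b c p q \<beta> V s k = (if P k then 1 else 0)" if k: "k \<le> K" for k
    proof (cases "k = K")
      case True
      then show ?thesis using \<open>s = 0\<close> unfolding opt_policy_def P_def by simp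
    next
      case kK: False
      then have kK': "k < K" using k by simp
      have q1: "Qval N K ps b c p q \<beta> V s k 0 - Qval N K ps b c p q \<beta> V s k 1
          = p * (\<beta> * (w (Suc k) - w k) - c)"
        using True kK' by (simp add: Q_0lt w_def algebra_simps)
      have "(Qval N K ps b c p q \<beta> V s k 0 \<ge> Qval N K ps b c p q \<beta> V s k 1) \<longleftrightarrow>
            0 \<le> p * (\<beta> * (w (Suc k) - w k) - c)" using q1 by linarith
      also have "\<dots> \<longleftrightarrow> \<not> P k" using p_range kK unfolding P_def
        by (auto simp add: zero_le_mult_iff)
      finally have ee: "(Qval N K ps b c p q \<beta> V s k 0 \<ge> Qval N K ps b c p q \<beta> V s k 1) \<longleftrightarrow> \<not> P k" .
      have "opt_policy N K ps b c p q \<beta> V s k = (if Qval N K ps b c p q \<beta> V s k 0 \<ge> Qval N K ps b c p q \<beta> V s k 1 then 0 else 1)"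
        unfolding opt_policy_def using True kK by simp
      then show ?thesis using ee by simp
    qed
    have up: "\<forall>i j. i \<le> j \<longrightarrow> j \<le> K \<longrightarrow> P i \<longrightarrow> P j"
    proof (intro allI impI)
      fix i j assume ij: "i \<le> j" "j \<le> K" "P i"
      show "P j"
      proof (cases "j = K")
        case True then show ?thesis unfolding P_def by simp
      next
        case False
        then have "i \<noteq> K" using ij by simp
        then have pi: "\<beta> * (w (Suc i) - w i) < c" using ij unfolding P_def by simp
        have "w (Suc j) - w (Suc j - 1) \<le> w (Suc i) - w (Suc i - 1)"
          using Dm[of "Suc i" "Suc j"] ij False by simp
        then have "\<beta> * (w (Suc j) - w j) \<le> \<beta> * (w (Suc i) - w i)"
          using beta_range by (simp add: mult_left_mono)
        then show ?thesis using pi unfolding P_def by simp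
      qed
    qed
    obtain Kth :: int where Kth: "\<forall>k\<le>K. (if P k then 1 else (0::nat)) = (if int k < Kth then 0 else 1)"
      using thr[OF up] by blast
    show ?thesis using pol Kth by (intro exI[of _ Kth]) auto
  qed
qed
end



theorem proposition1:
  fixes N K :: nat and ps b :: "nat \<Rightarrow> real" and c p q \<beta> :: real
    and V :: "nat \<Rightarrow> nat \<Rightarrow> real"
  assumes ps_pos: "\<forall>s\<le>N. 0 < ps s \<and> ps s < 1"
    and ps_sum: "(\<Sum>s\<in>{0..N}. ps s) = 1"
    and b_pos: "0 < b 1"
    and b_mono: "\<forall>i j. 1 \<le> i \<longrightarrow> i < j \<longrightarrow> j \<le> N \<longrightarrow> b i < b j"
    and K_ge: "K \<ge> 1"
    and c_pos: "c > 0"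
    and p_range: "0 < p" "p < 1"
    and q_range: "0 < q" "q < 1"
    and beta_range: "0 < \<beta>" "\<beta> < 1"
    and V_opt: "is_bellman_solution N K ps b c p q \<beta> V"
  shows "\<forall>s\<le>N. \<exists>Kth :: int. \<forall>k\<le>K.
           opt_policy N K ps b c p q \<beta> V s k = (if int k < Kth then 0 else 1)"
  by (rule main[OF _ ps_sum c_pos p_range q_range beta_range V_opt]) (use ps_pos in auto)

end
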